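(* The class of induced subgraphs of the square grid is $(6,1)$-disjointness-expressing.
   Context: The square grid is the infinite graph with vertex set $\mathbb{Z}^2$ in which two points are adjacent iff their Euclidean distance is 1; an induced subgraph of the square grid means a finite graph isomorphic to an induced subgraph of it. A class $\mathcal{C}$ of graphs is $(s,\kappa)$-disjointness-expressing if for some constant $\alpha>0$, for every positive integer $N$ and every $X\subseteq\{1,\dots,N\}$ one can define graphs $L(X)$ and $R(X)$, each containing a labelled set $S$ of special vertices, such that for all $A,B\subseteq\{1,\dots,N\}$: (i) the graph $g(L(A),R(B))$ obtained by identifying each vertex of $S$ in $L(A)$ with the corresponding vertex of $S$ in $R(B)$ is connected and has at most $\alpha N^{1/\kappa}$ vertices; (ii) the subgraph of $g(L(A),R(B))$ induced by the closed neighborhood $N[S]$ is independent of $A,B$ (for all $A,A',B,B'$ there is an isomorphism between these induced subgraphs that is the identity on $S$) and has at most $s$ vertices; (iii) $g(L(A),R(B))\in\mathcal{C}$ if and only if $A\cap B=\emptyset$. *)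

theory Defs
  imports Complex_Main
begin

text \<open>Finite simple graphs: a vertex set together with a set of ordered pairs
  (edges stored in both directions).\<close>
type_synonym 'v graph = "'v set \<times> ('v \<times> 'v) set"

definition verts :: "'v graph \<Rightarrow> 'v set" where "verts G = fst G"
definition edges :: "'v graph \<Rightarrow> ('v \<times> 'v) set" where "edges G = snd G"

definition simple_graph :: "'v graph \<Rightarrow> bool" where
  "simple_graph G \<longleftrightarrow> finite (verts G) \<and> edges G \<subseteq> verts G \<times> verts G
     \<and> sym (edges G) \<and> irrefl (edges G)"

definition connected_graph :: "'v graph \<Rightarrow> bool" where
  "connected_graph G \<longleftrightarrow> (\<forall>u\<in>verts G. \<forall>v\<in>verts G. (u, v) \<in> (edges G)\<^sup>*)"

definition induced_sub :: "'v graph \<Rightarrow> 'v set \<Rightarrow> 'v graph" where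
  "induced_sub G U = (verts G \<inter> U, edges G \<inter> (U \<times> U))"

definition closed_nbhd :: "'v graph \<Rightarrow> 'v set \<Rightarrow> 'v set" where
  "closed_nbhd G S = (verts G \<inter> S) \<union> {v \<in> verts G. \<exists>u\<in>S. (u, v) \<in> edges G}"

definition iso_fixing :: "'v set \<Rightarrow> 'v graph \<Rightarrow> 'v graph \<Rightarrow> bool" where
  "iso_fixing S G H \<longleftrightarrow> (\<exists>f. bij_betw f (verts G) (verts H)
     \<and> (\<forall>u\<in>verts G. \<forall>v\<in>verts G. (u, v) \<in> edges G \<longleftrightarrow> (f u, f v) \<in> edges H)
     \<and> (\<forall>x\<in>S \<inter> verts G. f x = x))"

text \<open>Gluing: disjoint union of L and R in which each special vertex x \<in> S of R
  is identified with the vertex x \<in> S of L (the labelling of S is the identity).\<close>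
definition glue_map :: "'v set \<Rightarrow> 'v \<Rightarrow> 'v + 'v" where
  "glue_map S v = (if v \<in> S then Inl v else Inr v)"

definition glue :: "'v set \<Rightarrow> 'v graph \<Rightarrow> 'v graph \<Rightarrow> ('v + 'v) graph" where
  "glue S L R =
     (Inl ` verts L \<union> glue_map S ` verts R,
      (\<lambda>(u, v). (Inl u, Inl v)) ` edges L \<union> (\<lambda>(u, v). (glue_map S u, glue_map S v)) ` edges R)"

definition grid_adj :: "int \<times> int \<Rightarrow> int \<times> int \<Rightarrow> bool" where
  "grid_adj p q \<longleftrightarrow>
     sqrt (real_of_int ((fst p - fst q)^2 + (snd p - snd q)^2)) = 1"

definition grid_induced :: "'v graph \<Rightarrow> bool" where
  "grid_induced G \<longleftrightarrow> finite (verts G) \<and>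
     (\<exists>f :: 'v \<Rightarrow> int \<times> int. inj_on f (verts G) \<and>
        (\<forall>u\<in>verts G. \<forall>v\<in>verts G. (u, v) \<in> edges G \<longleftrightarrow> grid_adj (f u) (f v)))"

text \<open>(s,kappa)-disjointness-expressing classes. Vertices of L(X), R(X) are
  natural numbers; S (depending on N only) is the common labelled set of special
  vertices.\<close>
definition disjointness_expressing ::
  "((nat + nat) graph \<Rightarrow> bool) \<Rightarrow> nat \<Rightarrow> nat \<Rightarrow> bool" where
  "disjointness_expressing C s \<kappa> \<longleftrightarrow>
    (\<exists>\<alpha>::real. \<alpha> > 0 \<and>
      (\<forall>N::nat. N \<ge> 1 \<longrightarrow>
        (\<exists>(L :: nat set \<Rightarrow> nat graph) (R :: nat set \<Rightarrow> nat graph) (S :: nat set).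
          (\<forall>X. X \<subseteq> {1..N} \<longrightarrow>
             simple_graph (L X) \<and> simple_graph (R X) \<and>
             S \<subseteq> verts (L X) \<and> S \<subseteq> verts (R X)) \<and>
          (\<forall>A B. A \<subseteq> {1..N} \<longrightarrow> B \<subseteq> {1..N} \<longrightarrow>
             connected_graph (glue S (L A) (R B)) \<and>
             real (card (verts (glue S (L A) (R B)))) \<le> \<alpha> * real N powr (1 / real \<kappa>) \<and>
             card (closed_nbhd (glue S (L A) (R B)) (Inl ` S)) \<le> s \<and>
             (C (glue S (L A) (R B)) \<longleftrightarrow> A \<inter> B = {})) \<and>
          (\<forall>A B A' B'. A \<subseteq> {1..N} \<longrightarrow> B \<subseteq> {1..N} \<longrightarrow> A' \<subseteq> {1..N} \<longrightarrow> B' \<subseteq> {1..N} \<longrightarrow>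
             iso_fixing (Inl ` S)
               (induced_sub (glue S (L A) (R B)) (closed_nbhd (glue S (L A) (R B)) (Inl ` S)))
               (induced_sub (glue S (L A') (R B')) (closed_nbhd (glue S (L A') (R B')) (Inl ` S)))))))"

end

theory Submission
  imports Defs "HOL-Library.Product_Plus" "HOL-Library.Nat_Bijection"
begin

definition unitv :: "int \<times> int \<Rightarrow> bool" where
  "unitv d \<longleftrightarrow> \<bar>fst d\<bar> + \<bar>snd d\<bar> = 1"

lemma unitv_cases: "unitv d \<Longrightarrow> d = (1,0) \<or> d = (-1,0) \<or> d = (0,1) \<or> d = (0,-1)"
  unfolding unitv_def by (cases d) (auto simp: abs_if split: if_splits)

lemma sq_ge4: fixes a :: int assumes "\<bar>a\<bar> \<ge> 2" shows "a^2 \<ge> 4"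
proof -
  have "2 * 2 \<le> \<bar>a\<bar> * \<bar>a\<bar>" using assms by (intro mult_mono) auto
  also have "\<bar>a\<bar> * \<bar>a\<bar> = a^2" by (simp add: power2_eq_square abs_mult_self_eq)
  finally show ?thesis by simp
qed

lemma sq_int_unit: fixes a b :: int shows "a^2 + b^2 = 1 \<longleftrightarrow> \<bar>a\<bar> + \<bar>b\<bar> = 1"
proof
  assume h: "a^2 + b^2 = 1"
  have "a^2 \<ge> 0" "b^2 \<ge> 0" by simp_all
  then have "\<bar>a\<bar> \<le> 1" "\<bar>b\<bar> \<le> 1" using h sq_ge4[of a] sq_ge4[of b] by linarith+
  then have "a \<in> {-1,0,1}" "b \<in> {-1,0,1}" by auto
  then show "\<bar>a\<bar> + \<bar>b\<bar> = 1" using h by auto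
next
  assume "\<bar>a\<bar> + \<bar>b\<bar> = 1"
  then have "(a, b) = (1,0) \<or> (a, b) = (-1,0) \<or> (a, b) = (0,1) \<or> (a, b) = (0,-1)"
    using unitv_cases[of "(a,b)"] by (simp add: unitv_def)
  then show "a^2 + b^2 = 1" by auto
qed

lemma grid_adj_unitv: "grid_adj p q \<longleftrightarrow> unitv (q - p)"
proof -
  have "grid_adj p q \<longleftrightarrow> (fst p - fst q)^2 + (snd p - snd q)^2 = 1"
    unfolding grid_adj_def real_sqrt_eq_1_iff
    by (metis of_int_eq_1_iff)
  also have "\<dots> \<longleftrightarrow> unitv (q - p)"
    unfolding sq_int_unit unitv_def by (simp add: abs_minus_commute)
  finally show ?thesis .
qed

lemma unitv_uminus[simp]: "unitv (- x) = unitv x"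
  by (simp add: unitv_def)

lemma unitv_swap: "unitv (a - b) = unitv (b - a)"
  by (metis minus_diff_eq unitv_uminus)

definition perp :: "int \<times> int \<Rightarrow> int \<times> int \<Rightarrow> bool" where
  "perp u v \<longleftrightarrow> fst u * fst v + snd u * snd v = 0"

lemma square:
  assumes "unitv (q - p)" "unitv (r - q)" "unitv (s - r)" "unitv (p - s)" "p \<noteq> r" "q \<noteq> s"
  shows "r - q = s - p \<and> perp (q - p) (s - p)"
proof -
  obtain u v w where u: "q = p + u" and v: "s = p + v" and w: "r = q + w"
    by (metis add.commute diff_add_cancel)
  have "unitv u" "unitv v" "unitv w" "unitv (-(u + w - v))"
    using assms(1,2,4) assms(3) u v w unitv_swap[of s p] by (simp_all add: algebra_simps)
  moreover have "u + w \<noteq> 0" "u \<noteq> v" using assms(5,6) u v w by (auto simp: algebra_simps)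
  ultimately have "w = v \<and> perp u v"
    apply -
    apply (drule unitv_cases)+
    apply (elim disjE)
    by (simp_all add: unitv_def perp_def zero_prod_def)
  then show ?thesis using u v w by (simp add: algebra_simps)
qed

lemma perp_same:
  assumes "unitv u" "unitv u'" "unitv e" "perp u e" "perp u' e"
  shows "u' = u \<or> u' = - u"
  using assms
    apply -
    apply (drule unitv_cases)+
    apply (elim disjE)
    by (simp_all add: unitv_def perp_def zero_prod_def)

lemma perp_third:
  assumes "unitv u" "unitv d" "unitv e" "perp u e" "d \<noteq> u" "d \<noteq> -u" "d \<noteq> -e"
  shows "d = e"
  using assms
    apply -
    apply (drule unitv_cases)+
    apply (elim disjE)
    by (simp_all add: unitv_def perp_def zero_prod_def)

lemma ladder:
  fixes a b :: "nat \<Rightarrow> int \<times> int"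
  assumes aa: "\<And>k. k < M \<Longrightarrow> unitv (a (Suc k) - a k)"
    and bb: "\<And>k. k < M \<Longrightarrow> unitv (b (Suc k) - b k)"
    and ab: "\<And>k. k \<le> M \<Longrightarrow> unitv (b k - a k)"
    and d1: "\<And>k. k < M \<Longrightarrow> a k \<noteq> b (Suc k)"
    and d2: "\<And>k. k < M \<Longrightarrow> b k \<noteq> a (Suc k)"
    and d3: "\<And>k. Suc (Suc k) \<le> M \<Longrightarrow> a k \<noteq> a (Suc (Suc k))"
  shows "\<And>k. k \<le> M \<Longrightarrow> b k - a k = b 0 - a 0"
    and "\<And>k. k < M \<Longrightarrow> a (Suc k) - a k = a 1 - a 0"
    and "\<And>k. k < M \<Longrightarrow> perp (a (Suc k) - a k) (b 0 - a 0)"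
proof -
  have sq: "b (Suc k) - a (Suc k) = b k - a k \<and> perp (a (Suc k) - a k) (b k - a k)" if "k < M" for k
  proof (rule square)
    show "unitv (a (Suc k) - a k)" using aa that by simp
    show "unitv (b (Suc k) - a (Suc k))" using ab that by simp
    show "unitv (b k - b (Suc k))" using bb that unitv_swap by metis
    show "unitv (a k - b k)" using ab that unitv_swap by (metis less_imp_le)
    show "a k \<noteq> b (Suc k)" using d1 that by simp
    show "a (Suc k) \<noteq> b k" using d2 that by metis
  qed
  show E: "b k - a k = b 0 - a 0" if "k \<le> M" for k
    using that
  proof (induction k)
    case 0 then show ?case by simp
  next
    case (Suc k) then show ?case using sq[of k] by simp
  qed
  show P: "perp (a (Suc k) - a k) (b 0 - a 0)" if "k < M" for k
    using sq[OF that] E[of k] that by simp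
  show "a (Suc k) - a k = a 1 - a 0" if "k < M" for k
    using that
  proof (induction k)
    case 0 then show ?case by simp
  next
    case (Suc k)
    have "a (Suc (Suc k)) - a (Suc k) = a (Suc k) - a k \<or> a (Suc (Suc k)) - a (Suc k) = - (a (Suc k) - a k)"
    proof (rule perp_same)
      show "unitv (a (Suc k) - a k)" using aa Suc by simp
      show "unitv (a (Suc (Suc k)) - a (Suc k))" using aa Suc by simp
      show "unitv (b 0 - a 0)" using ab by simp
      show "perp (a (Suc k) - a k) (b 0 - a 0)" using P Suc by simp
      show "perp (a (Suc (Suc k)) - a (Suc k)) (b 0 - a 0)" using P Suc by simp
    qed
    moreover have "a (Suc (Suc k)) - a (Suc k) \<noteq> - (a (Suc k) - a k)"
      using d3[of k] Suc.prems by (auto simp: algebra_simps)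
    ultimately show ?case using Suc by simp
  qed
qed

lemma ladder':
  fixes a b :: "nat \<Rightarrow> int \<times> int"
  assumes "\<forall>k. k < M \<longrightarrow> unitv (a (Suc k) - a k)"
    and "\<forall>k. k < M \<longrightarrow> unitv (b (Suc k) - b k)"
    and "\<forall>k. k \<le> M \<longrightarrow> unitv (b k - a k)"
    and "\<forall>k. k < M \<longrightarrow> a k \<noteq> b (Suc k)"
    and "\<forall>k. k < M \<longrightarrow> b k \<noteq> a (Suc k)"
    and "\<forall>k. Suc (Suc k) \<le> M \<longrightarrow> a k \<noteq> a (Suc (Suc k))"
  shows "\<forall>k. k \<le> M \<longrightarrow> b k - a k = b 0 - a 0"
    and "\<forall>k. k < M \<longrightarrow> a (Suc k) - a k = a 1 - a 0"
    and "\<forall>k. k < M \<longrightarrow> perp (a (Suc k) - a k) (b 0 - a 0)"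
  using ladder[of M a b] assms by blast+

definition smul :: "nat \<Rightarrow> int \<times> int \<Rightarrow> int \<times> int" where
  "smul k u = (int k * fst u, int k * snd u)"

lemma telescope:
  fixes a :: "nat \<Rightarrow> int \<times> int"
  assumes "\<And>k. k < M \<Longrightarrow> a (Suc k) - a k = u" "k \<le> M"
  shows "a k = a 0 + smul k u"
  using assms(2)
proof (induction k)
  case 0 then show ?case by (simp add: smul_def zero_prod_def)
next
  case (Suc k)
  then have "a (Suc k) = a k + u" using assms(1)[of k] by (simp add: algebra_simps)
  then show ?case using Suc by (cases u) (simp add: smul_def algebra_simps)
qed


definition Wd :: "nat \<Rightarrow> nat" where "Wd N = 2 * N + 2"

definition frame :: "nat \<Rightarrow> (nat \<times> nat) set" where
  "frame N = {p. (fst p \<le> Wd N \<and> (snd p = 0 \<or> snd p = 1 \<or> snd p = 4 \<or> snd p = 5)) \<or> (fst p \<le> 1 \<and> snd p \<le> 5)}"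

definition Lpts :: "nat \<Rightarrow> nat set \<Rightarrow> (nat \<times> nat) set" where
  "Lpts N A = {p \<in> frame N. snd p \<le> 3 \<or> fst p \<le> 2} \<union> (\<lambda>i. (2*i+1, 2)) ` A"

definition Rpts :: "nat \<Rightarrow> nat set \<Rightarrow> (nat \<times> nat) set" where
  "Rpts N B = {p \<in> frame N. 4 \<le> snd p \<and> 2 \<le> fst p} \<union> (\<lambda>i. (2*i+1, 3)) ` B"

definition Spts :: "(nat \<times> nat) set" where "Spts = {(2,4),(2,5)}"

definition toZ :: "nat \<times> nat \<Rightarrow> int \<times> int" where "toZ p = (int (fst p), int (snd p))"

definition padj :: "nat \<times> nat \<Rightarrow> nat \<times> nat \<Rightarrow> bool" where
  "padj p q \<longleftrightarrow> \<bar>int (fst p) - int (fst q)\<bar> + \<bar>int (snd p) - int (snd q)\<bar> = 1"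

lemma padj_grid: "padj p q \<longleftrightarrow> grid_adj (toZ p) (toZ q)"
  unfolding padj_def grid_adj_unitv unitv_def toZ_def by (simp add: abs_minus_commute)

definition ptgraph :: "(nat \<times> nat) set \<Rightarrow> nat graph" where
  "ptgraph P = (prod_encode ` P, {(prod_encode p, prod_encode q) | p q. p \<in> P \<and> q \<in> P \<and> padj p q})"

definition LG :: "nat \<Rightarrow> nat set \<Rightarrow> nat graph" where "LG N A = ptgraph (Lpts N A)"
definition RG :: "nat \<Rightarrow> nat set \<Rightarrow> nat graph" where "RG N B = ptgraph (Rpts N B)"
definition SS :: "nat set" where "SS = prod_encode ` Spts"

definition EH :: "nat \<Rightarrow> nat set \<Rightarrow> nat set \<Rightarrow> ((nat \<times> nat) \<times> (nat \<times> nat)) set" where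
  "EH N A B = {(p, q). (p \<in> Lpts N A \<and> q \<in> Lpts N A \<or> p \<in> Rpts N B \<and> q \<in> Rpts N B) \<and> padj p q}"

definition HG :: "nat \<Rightarrow> nat set \<Rightarrow> nat set \<Rightarrow> (nat \<times> nat) graph" where
  "HG N A B = (Lpts N A \<union> Rpts N B, EH N A B)"

definition sig :: "nat \<Rightarrow> nat set \<Rightarrow> nat \<times> nat \<Rightarrow> nat + nat" where
  "sig N A p = (if p \<in> Lpts N A then Inl (prod_encode p) else Inr (prod_encode p))"

definition mapg :: "('a \<Rightarrow> 'b) \<Rightarrow> 'a graph \<Rightarrow> 'b graph" where
  "mapg f G = (f ` verts G, (\<lambda>(u, v). (f u, f v)) ` edges G)"

lemma LR_inter:
  assumes "B \<subseteq> {1..N}" "p \<in> Rpts N B"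
  shows "p \<in> Lpts N A \<longleftrightarrow> p \<in> Spts"
  using assms unfolding Lpts_def Rpts_def Spts_def frame_def Wd_def by (cases p) auto

lemma S_sub: "N \<ge> 1 \<Longrightarrow> Spts \<subseteq> Lpts N A \<and> Spts \<subseteq> Rpts N B"
  unfolding Lpts_def Rpts_def Spts_def frame_def Wd_def by auto

lemma sig_L: "p \<in> Lpts N A \<Longrightarrow> sig N A p = Inl (prod_encode p)"
  by (simp add: sig_def)

lemma sig_R:
  assumes "B \<subseteq> {1..N}" "p \<in> Rpts N B"
  shows "sig N A p = glue_map SS (prod_encode p)"
proof -
  have "prod_encode p \<in> SS \<longleftrightarrow> p \<in> Spts"
    unfolding SS_def using inj_prod_encode[of UNIV] by (auto dest: injD)
  then show ?thesis using LR_inter[OF assms, of A] by (simp add: sig_def glue_map_def)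
qed

lemma glue_eq:
  assumes "B \<subseteq> {1..N}"
  shows "glue SS (LG N A) (RG N B) = mapg (sig N A) (HG N A B)"
proof -
  have V: "Inl ` prod_encode ` Lpts N A \<union> glue_map SS ` prod_encode ` Rpts N B
     = sig N A ` (Lpts N A \<union> Rpts N B)"
  proof -
    have "Inl ` prod_encode ` Lpts N A = sig N A ` Lpts N A"
      by (auto simp: sig_L image_image intro!: image_cong)
    moreover have "glue_map SS ` prod_encode ` Rpts N B = sig N A ` Rpts N B"
      unfolding image_image by (rule image_cong) (auto simp: sig_R[OF assms])
    ultimately show ?thesis by (simp add: image_Un)
  qed
  have E1: "(\<lambda>(u, v). (Inl u, Inl v)) ` {(prod_encode p, prod_encode q) |p q. p \<in> Lpts N A \<and> q \<in> Lpts N A \<and> padj p q}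
      = (\<lambda>(u, v). (sig N A u, sig N A v)) ` {(p, q). p \<in> Lpts N A \<and> q \<in> Lpts N A \<and> padj p q}"
    by (force simp: sig_L)
  have E2: "(\<lambda>(u, v). (glue_map SS u, glue_map SS v)) ` {(prod_encode p, prod_encode q) |p q. p \<in> Rpts N B \<and> q \<in> Rpts N B \<and> padj p q}
      = (\<lambda>(u, v). (sig N A u, sig N A v)) ` {(p, q). p \<in> Rpts N B \<and> q \<in> Rpts N B \<and> padj p q}"
    by (force simp: sig_R[OF assms])
  have E: "EH N A B = {(p, q). p \<in> Lpts N A \<and> q \<in> Lpts N A \<and> padj p q} \<union> {(p, q). p \<in> Rpts N B \<and> q \<in> Rpts N B \<and> padj p q}"
    unfolding EH_def by auto
  show ?thesis
    unfolding glue_def mapg_def LG_def RG_def ptgraph_def verts_def edges_def HG_def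
    using V E1 E2 E by (simp add: image_Un)
qed


lemma mapg_verts: "verts (mapg f G) = f ` verts G" by (simp add: mapg_def verts_def)
lemma mapg_edges: "edges (mapg f G) = (\<lambda>(u, v). (f u, f v)) ` edges G" by (simp add: mapg_def edges_def)

lemma mapg_edge_iff:
  assumes "inj_on f (verts G)" "edges G \<subseteq> verts G \<times> verts G" "u \<in> verts G" "v \<in> verts G"
  shows "(f u, f v) \<in> edges (mapg f G) \<longleftrightarrow> (u, v) \<in> edges G"
proof
  assume "(f u, f v) \<in> edges (mapg f G)"
  then obtain a b where ab: "(a, b) \<in> edges G" "f a = f u" "f b = f v" by (auto simp: mapg_edges)
  then have "a \<in> verts G" "b \<in> verts G" using assms(2) by auto
  then have "a = u" "b = v" using ab assms inj_on_def by metis+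
  then show "(u, v) \<in> edges G" using ab by simp
qed (force simp: mapg_edges)

lemma mapg_connected:
  assumes "connected_graph G"
  shows "connected_graph (mapg f G)"
  unfolding connected_graph_def
proof (intro ballI)
  fix x y assume "x \<in> verts (mapg f G)" "y \<in> verts (mapg f G)"
  then obtain u v where uv: "u \<in> verts G" "v \<in> verts G" "x = f u" "y = f v" by (auto simp: mapg_verts)
  then have "(u, v) \<in> (edges G)\<^sup>*" using assms unfolding connected_graph_def by blast
  then have "(f u, f v) \<in> (edges (mapg f G))\<^sup>*"
  proof (induction rule: rtrancl_induct)
    case base then show ?case by simp
  next
    case (step b c)
    then have "(f b, f c) \<in> edges (mapg f G)" by (force simp: mapg_edges)
    then show ?case using step by (meson rtrancl.rtrancl_into_rtrancl)
  qed
  then show "(x, y) \<in> (edges (mapg f G))\<^sup>*" using uv by simp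
qed

lemma mapg_card: "inj_on f (verts G) \<Longrightarrow> card (verts (mapg f G)) = card (verts G)"
  by (simp add: mapg_verts card_image)

lemma mapg_grid_induced:
  assumes "inj_on f (verts G)" "edges G \<subseteq> verts G \<times> verts G"
  shows "grid_induced (mapg f G) \<longleftrightarrow> grid_induced G"
proof
  assume "grid_induced (mapg f G)"
  then obtain h where h: "finite (f ` verts G)" "inj_on h (f ` verts G)"
    "\<forall>u\<in>f ` verts G. \<forall>v\<in>f ` verts G. (u, v) \<in> edges (mapg f G) \<longleftrightarrow> grid_adj (h u) (h v)"
    unfolding grid_induced_def mapg_verts by blast
  show "grid_induced G" unfolding grid_induced_def
  proof (intro conjI exI[of _ "h \<circ> f"])
    show "finite (verts G)" using h(1) assms(1) finite_image_iff by blast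
    show "inj_on (h \<circ> f) (verts G)" using h(2) assms(1) comp_inj_on by blast
    show "\<forall>u\<in>verts G. \<forall>v\<in>verts G. (u, v) \<in> edges G \<longleftrightarrow> grid_adj ((h \<circ> f) u) ((h \<circ> f) v)"
      using h(3) mapg_edge_iff[OF assms] by simp
  qed
next
  assume "grid_induced G"
  then obtain h where h: "finite (verts G)" "inj_on h (verts G)"
    "\<forall>u\<in>verts G. \<forall>v\<in>verts G. (u, v) \<in> edges G \<longleftrightarrow> grid_adj (h u) (h v)"
    unfolding grid_induced_def by blast
  define g where "g = h \<circ> inv_into (verts G) f"
  have gf: "g (f u) = h u" if "u \<in> verts G" for u
    using that assms(1) by (simp add: g_def)
  show "grid_induced (mapg f G)" unfolding grid_induced_def mapg_verts
  proof (intro conjI exI[of _ g])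
    show "finite (f ` verts G)" using h(1) by simp
    show "inj_on g (f ` verts G)"
    proof (rule inj_onI)
      fix x y assume "x \<in> f ` verts G" "y \<in> f ` verts G" "g x = g y"
      then obtain a b where "a \<in> verts G" "b \<in> verts G" "x = f a" "y = f b" "h a = h b"
        using gf by auto
      then show "x = y" using h(2) by (simp add: inj_on_eq_iff)
    qed
    show "\<forall>u\<in>f ` verts G. \<forall>v\<in>f ` verts G. (u, v) \<in> edges (mapg f G) \<longleftrightarrow> grid_adj (g u) (g v)"
      using h(3) mapg_edge_iff[OF assms] gf by auto
  qed
qed

lemma mapg_nbhd:
  assumes "inj_on f (verts G)" "edges G \<subseteq> verts G \<times> verts G" "T \<subseteq> verts G"
  shows "closed_nbhd (mapg f G) (f ` T) = f ` closed_nbhd G T"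
proof -
  have "closed_nbhd (mapg f G) (f ` T) = (f ` verts G \<inter> f ` T) \<union> {x \<in> f ` verts G. \<exists>y\<in>f ` T. (y, x) \<in> edges (mapg f G)}"
    by (simp add: closed_nbhd_def mapg_verts)
  also have "f ` verts G \<inter> f ` T = f ` (verts G \<inter> T)" using assms(1,3) by auto
  also have "{x \<in> f ` verts G. \<exists>y\<in>f ` T. (y, x) \<in> edges (mapg f G)} = f ` {v \<in> verts G. \<exists>u\<in>T. (u, v) \<in> edges G}"
  proof -
    have "{x \<in> f ` verts G. \<exists>y\<in>f ` T. (y, x) \<in> edges (mapg f G)} = f ` {v \<in> verts G. \<exists>y\<in>f ` T. (y, f v) \<in> edges (mapg f G)}"
      by auto
    also have "{v \<in> verts G. \<exists>y\<in>f ` T. (y, f v) \<in> edges (mapg f G)} = {v \<in> verts G. \<exists>u\<in>T. (u, v) \<in> edges G}"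
      using mapg_edge_iff[OF assms(1,2)] assms(3) by blast
    finally show ?thesis .
  qed
  finally show ?thesis by (simp add: closed_nbhd_def image_Un)
qed

lemma mapg_induced:
  assumes "inj_on f (verts G)" "edges G \<subseteq> verts G \<times> verts G" "U \<subseteq> verts G"
  shows "induced_sub (mapg f G) (f ` U) = mapg f (induced_sub G U)"
proof -
  have V: "f ` verts G \<inter> f ` U = f ` (verts G \<inter> U)" using assms(1,3) by auto
  have E: "(\<lambda>(u, v). (f u, f v)) ` edges G \<inter> (f ` U \<times> f ` U) = (\<lambda>(u, v). (f u, f v)) ` (edges G \<inter> (U \<times> U))"
  proof
    show "(\<lambda>(u, v). (f u, f v)) ` edges G \<inter> (f ` U \<times> f ` U) \<subseteq> (\<lambda>(u, v). (f u, f v)) ` (edges G \<inter> (U \<times> U))"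
    proof
      fix x assume "x \<in> (\<lambda>(u, v). (f u, f v)) ` edges G \<inter> (f ` U \<times> f ` U)"
      then obtain a b a' b' where "(a, b) \<in> edges G" "x = (f a, f b)" "a' \<in> U" "b' \<in> U" "f a = f a'" "f b = f b'"
        by fastforce
      moreover then have "a = a'" "b = b'" using assms inj_on_def by (metis SigmaD1 SigmaD2 subsetD)+
      ultimately show "x \<in> (\<lambda>(u, v). (f u, f v)) ` (edges G \<inter> (U \<times> U))" by auto
    qed
  qed auto
  show ?thesis unfolding induced_sub_def mapg_def verts_def edges_def
    using V E by (simp add: verts_def edges_def)
qed


lemma frame_mem: "(x, y) \<in> frame N \<longleftrightarrow> (x \<le> Wd N \<and> (y = 0 \<or> y = 1 \<or> y = 4 \<or> y = 5)) \<or> (x \<le> 1 \<and> y \<le> 5)"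
  by (simp add: frame_def)

lemma L_mem: "(x, y) \<in> Lpts N A \<longleftrightarrow> ((x, y) \<in> frame N \<and> (y \<le> 3 \<or> x \<le> 2)) \<or> (\<exists>i\<in>A. x = 2*i+1 \<and> y = 2)"
  by (auto simp: Lpts_def)

lemma R_mem: "(x, y) \<in> Rpts N B \<longleftrightarrow> ((x, y) \<in> frame N \<and> 4 \<le> y \<and> 2 \<le> x) \<or> (\<exists>i\<in>B. x = 2*i+1 \<and> y = 3)"
  by (auto simp: Rpts_def)

lemma EH_mem: "((x, y), (x', y')) \<in> EH N A B \<longleftrightarrow>
   (((x, y) \<in> Lpts N A \<and> (x', y') \<in> Lpts N A) \<or> ((x, y) \<in> Rpts N B \<and> (x', y') \<in> Rpts N B)) \<and> padj (x, y) (x', y')"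
  by (simp add: EH_def)

lemma HG_simps: "verts (HG N A B) = Lpts N A \<union> Rpts N B" "edges (HG N A B) = EH N A B"
  by (simp_all add: HG_def verts_def edges_def)

lemma EH_sub: "EH N A B \<subseteq> (Lpts N A \<union> Rpts N B) \<times> (Lpts N A \<union> Rpts N B)"
  by (auto simp: EH_def)

lemma EH_sym: "sym (EH N A B)"
  unfolding sym_def EH_def padj_def by (auto simp: abs_minus_commute)

lemma sig_inj: "inj_on (sig N A) X"
  unfolding inj_on_def sig_def by (auto split: if_splits dest: injD[OF inj_prod_encode])

lemma P_sub:
  assumes "A \<subseteq> {1..N}" "B \<subseteq> {1..N}"
  shows "Lpts N A \<union> Rpts N B \<subseteq> {..Wd N} \<times> {..5}"
  using assms unfolding Lpts_def Rpts_def frame_def Wd_def by fastforce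

lemma P_fin:
  assumes "A \<subseteq> {1..N}" "B \<subseteq> {1..N}"
  shows "finite (Lpts N A \<union> Rpts N B)"
  using P_sub[OF assms] finite_subset by blast

lemma P_card:
  assumes "A \<subseteq> {1..N}" "B \<subseteq> {1..N}" "N \<ge> 1"
  shows "card (Lpts N A \<union> Rpts N B) \<le> 30 * N"
proof -
  have "card (Lpts N A \<union> Rpts N B) \<le> card ({..Wd N} \<times> {..5::nat})"
    using P_sub[OF assms(1,2)] by (intro card_mono) auto
  also have "\<dots> = (2*N+3) * 6" by (simp add: card_cartesian_product Wd_def)
  also have "\<dots> \<le> 30 * N" using assms(3) by simp
  finally show ?thesis .
qed


definition mes :: "nat \<times> nat \<Rightarrow> nat" where
  "mes p = 2 * fst p + snd p + (if snd p = 3 \<and> fst p \<ge> 2 then 10 else 0)"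

lemma conn_step:
  assumes "A \<subseteq> {1..N}" "B \<subseteq> {1..N}" "N \<ge> 1"
    and p: "p \<in> Lpts N A \<union> Rpts N B" "p \<noteq> (0, 0)"
  shows "\<exists>q. q \<in> Lpts N A \<union> Rpts N B \<and> (p, q) \<in> EH N A B \<and> mes q < mes p"
proof -
  obtain x y where xy: "p = (x, y)" by fastforce
  have cases: "(\<exists>i\<in>A. p = (2*i+1, 2)) \<or> (\<exists>i\<in>B. p = (2*i+1, 3)) \<or> p \<in> frame N"
    using p(1) unfolding Lpts_def Rpts_def by auto
  moreover {
    fix i assume i: "i \<in> A" "p = (2*i+1, 2)"
    have "i \<le> N" "1 \<le> i" using i assms by auto
    then have ?thesis using i
      by (intro exI[of _ "(2*i+1, 1)"]) (auto simp: EH_mem L_mem frame_mem Wd_def padj_def mes_def)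
  }
  moreover {
    fix i assume i: "i \<in> B" "p = (2*i+1, 3)"
    have "i \<le> N" "1 \<le> i" using i assms by auto
    then have ?thesis using i
      by (intro exI[of _ "(2*i+1, 4)"]) (auto simp: EH_mem R_mem frame_mem Wd_def padj_def mes_def)
  }
  moreover {
    assume f: "p \<in> frame N"
    then have f': "(x \<le> Wd N \<and> (y = 0 \<or> y = 1 \<or> y = 4 \<or> y = 5)) \<or> (x \<le> 1 \<and> y \<le> 5)"
      using xy frame_mem by simp
    have ?thesis
    proof -
      consider "y = 0" "x > 0" | "y = 1" | "y = 2 \<or> y = 3" "x \<le> 1" | "y = 4" "x = 0" | "y = 4" "x > 0" | "y = 5"
        using f' p(2) xy by fastforce
      then show ?thesis
      proof cases
        case 1 then show ?thesis using f' xy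
          by (intro exI[of _ "(x - 1, 0)"]) (auto simp: EH_mem L_mem frame_mem padj_def mes_def)
      next
        case 2 then show ?thesis using f' xy
          by (intro exI[of _ "(x, 0)"]) (auto simp: EH_mem L_mem frame_mem padj_def mes_def)
      next
        case 3 then show ?thesis using f' xy
          by (intro exI[of _ "(x, y - 1)"]) (auto simp: EH_mem L_mem frame_mem padj_def mes_def)
      next
        case 4 then show ?thesis using f' xy
          by (intro exI[of _ "(0, 3)"]) (auto simp: EH_mem L_mem frame_mem padj_def mes_def)
      next
        case 5 then show ?thesis using f' xy
          by (intro exI[of _ "(x - 1, 4)"]) (auto simp: EH_mem L_mem R_mem frame_mem padj_def mes_def)
      next
        case 6 then show ?thesis using f' xy
          by (intro exI[of _ "(x, 4)"]) (auto simp: EH_mem L_mem R_mem frame_mem padj_def mes_def)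
      qed
    qed
  }
  ultimately show ?thesis by blast
qed

lemma HG_connected:
  assumes "A \<subseteq> {1..N}" "B \<subseteq> {1..N}" "N \<ge> 1"
  shows "connected_graph (HG N A B)"
proof -
  let ?P = "Lpts N A \<union> Rpts N B" and ?E = "EH N A B"
  have reach: "p \<in> ?P \<Longrightarrow> (p, (0,0)) \<in> ?E\<^sup>*" for p
  proof (induction "mes p" arbitrary: p rule: less_induct)
    case less
    show ?case
    proof (cases "p = (0,0)")
      case True then show ?thesis by simp
    next
      case False
      then obtain q where "q \<in> ?P" "(p, q) \<in> ?E" "mes q < mes p"
        using conn_step[OF assms less.prems] by blast
      then show ?thesis using less.hyps by (meson converse_rtrancl_into_rtrancl)
    qed
  qed
  have symE: "?E\<inverse> = ?E" using EH_sym sym_conv_converse_eq by blast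
  show ?thesis unfolding connected_graph_def HG_simps
  proof (intro ballI)
    fix u v assume "u \<in> ?P" "v \<in> ?P"
    then have "(u, (0,0)) \<in> ?E\<^sup>*" "(v, (0,0)) \<in> ?E\<^sup>*" using reach by auto
    then have "((0,0), v) \<in> ?E\<^sup>*" using symE by (metis rtrancl_converseI)
    then show "(u, v) \<in> ?E\<^sup>*" using \<open>(u, (0,0)) \<in> ?E\<^sup>*\<close> by (meson rtrancl_trans)
  qed
qed


lemma padj_iff: "padj (a, b) (x, y) \<longleftrightarrow> (x = a + 1 \<and> y = b) \<or> (x + 1 = a \<and> y = b) \<or> (x = a \<and> y = b + 1) \<or> (x = a \<and> y + 1 = b)"
  unfolding padj_def by (simp add: abs_if) arith

definition Npts :: "(nat \<times> nat) set" where "Npts = {(1,4),(2,4),(3,4),(1,5),(2,5),(3,5)}"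

definition KG :: "(nat \<times> nat) graph" where "KG = (Npts, {(p, q). p \<in> Npts \<and> q \<in> Npts \<and> padj p q})"

lemma nbhd_HG:
  assumes "A \<subseteq> {1..N}" "B \<subseteq> {1..N}" "N \<ge> 1"
  shows "closed_nbhd (HG N A B) Spts = Npts"
proof -
  have W: "Wd N \<ge> 4" using assms(3) by (simp add: Wd_def)
  have N: "Npts \<subseteq> Lpts N A \<union> Rpts N B"
    using W unfolding Npts_def by (auto simp: L_mem R_mem frame_mem)
  have "closed_nbhd (HG N A B) Spts \<subseteq> Npts"
  proof
    fix v assume v: "v \<in> closed_nbhd (HG N A B) Spts"
    obtain x y where xy: "v = (x, y)" by fastforce
    show "v \<in> Npts"
    proof (cases "v \<in> Spts")
      case True then show ?thesis by (auto simp: Spts_def Npts_def)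
    next
      case False
      then obtain u where u: "u \<in> Spts" "(u, v) \<in> EH N A B" "v \<in> Lpts N A \<union> Rpts N B"
        using v by (auto simp: closed_nbhd_def HG_simps)
      then have "padj u v" by (simp add: EH_def)
      then have "(x, y) \<in> {(1,4),(3,4),(2,5),(2,3),(1,5),(3,5),(2,6),(2,4)}"
        using u(1) xy unfolding Spts_def by (auto simp: padj_iff)
      moreover have "(x, y) \<noteq> (2,3)" "(x, y) \<noteq> (2,6)"
        using u(3) xy assms by (auto simp: L_mem R_mem frame_mem)
      ultimately show ?thesis using xy by (auto simp: Npts_def)
    qed
  qed
  moreover have "Npts \<subseteq> closed_nbhd (HG N A B) Spts"
  proof -
    have L14: "(1,4) \<in> Lpts N A" "(2,4) \<in> Lpts N A" "(1,5) \<in> Lpts N A" "(2,5) \<in> Lpts N A"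
      using W by (simp_all add: L_mem frame_mem)
    have R34: "(3,4) \<in> Rpts N B" "(2,4) \<in> Rpts N B" "(3,5) \<in> Rpts N B" "(2,5) \<in> Rpts N B"
      using W by (simp_all add: R_mem frame_mem)
    have e: "((2,4),(1,4)) \<in> EH N A B" "((2,4),(3,4)) \<in> EH N A B"
       "((2,5),(1,5)) \<in> EH N A B" "((2,5),(3,5)) \<in> EH N A B"
      using L14 R34 unfolding EH_mem by (simp_all add: padj_iff)
    have S: "(2,4) \<in> Spts" "(2,5) \<in> Spts" by (simp_all add: Spts_def)
    show ?thesis unfolding Npts_def closed_nbhd_def HG_simps
      using L14 R34 e S by blast
  qed
  ultimately show ?thesis by blast
qed

lemma induced_HG:
  assumes "A \<subseteq> {1..N}" "B \<subseteq> {1..N}" "N \<ge> 1"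
  shows "induced_sub (HG N A B) Npts = KG"
proof -
  have W: "Wd N \<ge> 4" using assms(3) by (simp add: Wd_def)
  have N: "Npts \<subseteq> Lpts N A \<union> Rpts N B"
    using W unfolding Npts_def by (auto simp: L_mem R_mem frame_mem)
  have NL: "p \<in> Lpts N A" if "p \<in> Npts" "fst p \<le> 2" for p
    using that W unfolding Npts_def by (auto simp: L_mem frame_mem)
  have NR: "p \<in> Rpts N B" if "p \<in> Npts" "fst p \<ge> 2" for p
    using that W unfolding Npts_def by (auto simp: R_mem frame_mem)
  have N13: "1 \<le> fst p \<and> fst p \<le> 3" if "p \<in> Npts" for p
    using that unfolding Npts_def by auto
  have pd: "fst q \<le> fst p + 1 \<and> fst p \<le> fst q + 1" if "padj p q" for p q
    using that unfolding padj_def by arith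
  have E: "EH N A B \<inter> (Npts \<times> Npts) = {(p, q). p \<in> Npts \<and> q \<in> Npts \<and> padj p q}"
  proof
    show "EH N A B \<inter> (Npts \<times> Npts) \<subseteq> {(p, q). p \<in> Npts \<and> q \<in> Npts \<and> padj p q}"
      by (auto simp: EH_def)
    show "{(p, q). p \<in> Npts \<and> q \<in> Npts \<and> padj p q} \<subseteq> EH N A B \<inter> (Npts \<times> Npts)"
    proof (clarify)
      fix a b c d assume h: "(a, b) \<in> Npts" "(c, d) \<in> Npts" "padj (a, b) (c, d)"
      have "a \<le> 2 \<and> c \<le> 2 \<or> a \<ge> 2 \<and> c \<ge> 2"
        using N13[OF h(1)] N13[OF h(2)] pd[OF h(3)] by auto
      then show "((a, b), (c, d)) \<in> EH N A B \<inter> (Npts \<times> Npts)"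
        using NL[OF h(1)] NL[OF h(2)] NR[OF h(1)] NR[OF h(2)] h by (auto simp: EH_def)
    qed
  qed
  show ?thesis using N E unfolding induced_sub_def KG_def HG_simps by auto
qed


lemma cross:
  assumes "A \<subseteq> {1..N}" "B \<subseteq> {1..N}"
    and "p \<in> Lpts N A" "p \<notin> Rpts N B" "q \<in> Rpts N B" "q \<notin> Lpts N A" "padj p q"
  shows "\<exists>i\<in>A \<inter> B. p = (2*i+1, 2) \<and> q = (2*i+1, 3)"
proof -
  obtain x y x' y' where xy: "p = (x, y)" "q = (x', y')" by fastforce
  have pd: "(x' = x + 1 \<and> y' = y) \<or> (x' + 1 = x \<and> y' = y) \<or> (x' = x \<and> y' = y + 1) \<or> (x' = x \<and> y' + 1 = y)"
    using assms(7) xy by (simp add: padj_iff)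
  have q0: "(x', y') \<in> Rpts N B" "(x', y') \<notin> Lpts N A" "(x, y) \<in> Lpts N A" "(x, y) \<notin> Rpts N B"
    using assms(3-6) xy by auto
  have q: "(x' \<le> Wd N \<and> 4 \<le> y' \<and> 3 \<le> x') \<or> (\<exists>j\<in>B. x' = 2*j+1 \<and> y' = 3)"
    using q0(1,2) by (auto simp: R_mem L_mem frame_mem)
  have p: "((x \<le> Wd N \<and> (y = 0 \<or> y = 1 \<or> y = 4 \<or> y = 5) \<or> x \<le> 1 \<and> y \<le> 5) \<and> (y \<le> 3 \<or> x \<le> 1))
      \<or> (\<exists>i\<in>A. x = 2*i+1 \<and> y = 2)"
    using q0(3,4) by (auto simp: R_mem L_mem frame_mem)
  show ?thesis
  proof (cases "\<exists>j\<in>B. x' = 2*j+1 \<and> y' = 3")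
    case True
    then obtain j where j: "j \<in> B" "x' = 2*j+1" "y' = 3" by blast
    have "j \<ge> 1" using j assms(2) by auto
    then have "\<exists>i\<in>A. x = 2*i+1 \<and> y = 2" using p pd j by auto
    then obtain i where i: "i \<in> A" "x = 2*i+1" "y = 2" by blast
    then have "i = j" using pd j by auto
    then show ?thesis using i j xy by auto
  next
    case False
    then have "x' \<le> Wd N \<and> 4 \<le> y' \<and> 3 \<le> x'" using q by blast
    then have False using p pd by auto
    then show ?thesis ..
  qed
qed

lemma frame_P: "frame N \<subseteq> Lpts N A \<union> Rpts N B"
  unfolding Lpts_def Rpts_def by auto

lemma frame_edge:
  assumes "p \<in> frame N" "q \<in> frame N" "padj p q"
  shows "(p, q) \<in> EH N A B"
proof -
  obtain x y x' y' where xy: "p = (x, y)" "q = (x', y')" by fastforce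
  have pd: "(x' = x + 1 \<and> y' = y) \<or> (x' + 1 = x \<and> y' = y) \<or> (x' = x \<and> y' = y + 1) \<or> (x' = x \<and> y' + 1 = y)"
    using assms(3) xy by (simp add: padj_iff)
  have "(y \<le> 3 \<or> x \<le> 2) \<and> (y' \<le> 3 \<or> x' \<le> 2) \<or> (4 \<le> y \<and> 2 \<le> x \<and> 4 \<le> y' \<and> 2 \<le> x')"
    using assms(1,2) xy pd by (auto simp: frame_mem)
  then show ?thesis using assms xy unfolding EH_def Lpts_def Rpts_def by auto
qed

lemma embed_disjoint:
  assumes "A \<subseteq> {1..N}" "B \<subseteq> {1..N}" "A \<inter> B = {}"
  shows "grid_induced (HG N A B)"
  unfolding grid_induced_def HG_simps
proof (intro conjI exI[of _ toZ])
  show "finite (Lpts N A \<union> Rpts N B)" using P_fin[OF assms(1,2)] .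
  show "inj_on toZ (Lpts N A \<union> Rpts N B)" by (auto simp: inj_on_def toZ_def prod_eq_iff)
  show "\<forall>u\<in>Lpts N A \<union> Rpts N B. \<forall>v\<in>Lpts N A \<union> Rpts N B. (u, v) \<in> EH N A B \<longleftrightarrow> grid_adj (toZ u) (toZ v)"
  proof (intro ballI)
    fix u v assume uv: "u \<in> Lpts N A \<union> Rpts N B" "v \<in> Lpts N A \<union> Rpts N B"
    show "(u, v) \<in> EH N A B \<longleftrightarrow> grid_adj (toZ u) (toZ v)"
    proof
      assume "(u, v) \<in> EH N A B" then show "grid_adj (toZ u) (toZ v)" by (simp add: EH_def padj_grid)
    next
      assume g: "grid_adj (toZ u) (toZ v)"
      then have pa: "padj u v" "padj v u" by (simp_all add: padj_grid) (metis padj_def padj_grid abs_minus_commute)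
      show "(u, v) \<in> EH N A B"
      proof (rule ccontr)
        assume n: "(u, v) \<notin> EH N A B"
        then have "\<not> (u \<in> Lpts N A \<and> v \<in> Lpts N A) \<and> \<not> (u \<in> Rpts N B \<and> v \<in> Rpts N B)"
          using pa by (auto simp: EH_def)
        then have "(u \<in> Lpts N A \<and> u \<notin> Rpts N B \<and> v \<in> Rpts N B \<and> v \<notin> Lpts N A) \<or>
                   (v \<in> Lpts N A \<and> v \<notin> Rpts N B \<and> u \<in> Rpts N B \<and> u \<notin> Lpts N A)"
          using uv by blast
        then show False
          using cross[OF assms(1,2), of u v] cross[OF assms(1,2), of v u] pa assms(3) by blast
      qed
    qed
  qed
qed


lemma rigid:
  assumes AB: "A \<subseteq> {1..N}" "B \<subseteq> {1..N}" "N \<ge> 1" and i: "i \<in> A" "i \<in> B"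
    and ginj: "inj_on g (Lpts N A \<union> Rpts N B)"
    and hg: "\<forall>p\<in>Lpts N A \<union> Rpts N B. \<forall>q\<in>Lpts N A \<union> Rpts N B. (p, q) \<in> EH N A B \<longleftrightarrow> grid_adj (g p) (g q)"
  shows False
proof -
  let ?P = "Lpts N A \<union> Rpts N B"
  define W where "W = Wd N"
  have W4: "W \<ge> 4" using AB(3) by (simp add: W_def Wd_def)
  have adjE: "unitv (g q - g p)" if "p \<in> ?P" "q \<in> ?P" "(p, q) \<in> EH N A B" for p q
    using hg that grid_adj_unitv by blast
  have neq: "g p \<noteq> g q" if "p \<in> ?P" "q \<in> ?P" "p \<noteq> q" for p q
    using ginj that inj_on_def by metis
  have fP: "p \<in> ?P" if "p \<in> frame N" for p using frame_P that by blast
  have fe: "unitv (g q - g p)" if "p \<in> frame N" "q \<in> frame N" "padj p q" for p q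
    using adjE fP frame_edge that by blast
  have fn: "g p \<noteq> g q" if "p \<in> frame N" "q \<in> frame N" "p \<noteq> q" for p q
    using neq fP that by blast
  note fm = frame_mem W_def[symmetric] padj_iff
  define u where "u = g (1,0) - g (0,0)"
  define e where "e = g (0,1) - g (0,0)"
  have L1h1: "\<forall>k. k < W \<longrightarrow> unitv (g (Suc k,0) - g (k,0))" using W4 by (intro allI impI fe) (simp_all add: fm)
  have L1h2: "\<forall>k. k < W \<longrightarrow> unitv (g (Suc k,1) - g (k,1))" using W4 by (intro allI impI fe) (simp_all add: fm)
  have L1h3: "\<forall>k. k \<le> W \<longrightarrow> unitv (g (k,1) - g (k,0))" using W4 by (intro allI impI fe) (simp_all add: fm)
  have L1h4: "\<forall>k. k < W \<longrightarrow> g (k,0) \<noteq> g (Suc k,1)" using W4 by (intro allI impI fn) (simp_all add: fm)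
  have L1h5: "\<forall>k. k < W \<longrightarrow> g (k,1) \<noteq> g (Suc k,0)" using W4 by (intro allI impI fn) (simp_all add: fm)
  have L1h6: "\<forall>k. Suc (Suc k) \<le> W \<longrightarrow> g (k,0) \<noteq> g (Suc (Suc k),0)" using W4 by (intro allI impI fn) (simp_all add: fm)
  note L1 = ladder'[where a = "\<lambda>k. g (k,0)" and b = "\<lambda>k. g (k,1)" and M = W, OF L1h1 L1h2 L1h3 L1h4 L1h5 L1h6]
  have L2h1: "\<forall>k. k < 5 \<longrightarrow> unitv (g (0,Suc k) - g (0,k))" by (intro allI impI fe) (simp_all add: fm)
  have L2h2: "\<forall>k. k < 5 \<longrightarrow> unitv (g (1,Suc k) - g (1,k))" by (intro allI impI fe) (simp_all add: fm)
  have L2h3: "\<forall>k. k \<le> 5 \<longrightarrow> unitv (g (1,k) - g (0,k))" by (intro allI impI fe) (simp_all add: fm)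
  have L2h4: "\<forall>k. k < 5 \<longrightarrow> g (0,k) \<noteq> g (1,Suc k)" by (intro allI impI fn) (simp_all add: fm)
  have L2h5: "\<forall>k. k < 5 \<longrightarrow> g (1,k) \<noteq> g (0,Suc k)" by (intro allI impI fn) (simp_all add: fm)
  have L2h6: "\<forall>k. Suc (Suc k) \<le> 5 \<longrightarrow> g (0,k) \<noteq> g (0,Suc (Suc k))" by (intro allI impI fn) (simp_all add: fm)
  note L2 = ladder'[where a = "\<lambda>k. g (0,k)" and b = "\<lambda>k. g (1,k)" and M = 5, OF L2h1 L2h2 L2h3 L2h4 L2h5 L2h6]
  have L3h1: "\<forall>k. k < W \<longrightarrow> unitv (g (Suc k,4) - g (k,4))" using W4 by (intro allI impI fe) (simp_all add: fm)
  have L3h2: "\<forall>k. k < W \<longrightarrow> unitv (g (Suc k,5) - g (k,5))" using W4 by (intro allI impI fe) (simp_all add: fm)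
  have L3h3: "\<forall>k. k \<le> W \<longrightarrow> unitv (g (k,5) - g (k,4))" using W4 by (intro allI impI fe) (simp_all add: fm)
  have L3h4: "\<forall>k. k < W \<longrightarrow> g (k,4) \<noteq> g (Suc k,5)" using W4 by (intro allI impI fn) (simp_all add: fm)
  have L3h5: "\<forall>k. k < W \<longrightarrow> g (k,5) \<noteq> g (Suc k,4)" using W4 by (intro allI impI fn) (simp_all add: fm)
  have L3h6: "\<forall>k. Suc (Suc k) \<le> W \<longrightarrow> g (k,4) \<noteq> g (Suc (Suc k),4)" using W4 by (intro allI impI fn) (simp_all add: fm)
  note L3 = ladder'[where a = "\<lambda>k. g (k,4)" and b = "\<lambda>k. g (k,5)" and M = W, OF L3h1 L3h2 L3h3 L3h4 L3h5 L3h6]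
  have pue: "perp u e" using L1(3)[rule_format, of 0] W4 by (simp add: u_def e_def)
  have uu: "unitv u" unfolding u_def by (rule fe) (simp_all add: fm)
  have ue: "unitv e" unfolding e_def by (rule fe) (simp_all add: fm)
  have d0: "g (Suc k,0) - g (k,0) = u" if "k < W" for k using L1(2) that unfolding u_def by blast
  have r1: "g (k,1) = g (k,0) + e" if "k \<le> W" for k
  proof -
    have "g (k,1) - g (k,0) = e" using L1(1) that unfolding e_def by blast
    then show ?thesis by (metis add.commute diff_add_cancel)
  qed
  have d2: "g (0, Suc k) - g (0,k) = e" if "k < 5" for k using L2(2) that unfolding e_def by blast
  have g14: "g (1,4) - g (0,4) = u" using L2(1)[rule_format, of 4] unfolding u_def by simp
  have g54: "g (0,5) - g (0,4) = e" using d2[of 4] by simp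
  have r5: "g (k,5) = g (k,4) + e" if "k \<le> W" for k
  proof -
    have "g (k,5) - g (k,4) = e" using L3(1)[rule_format, OF that] g54 by simp
    then show ?thesis by (metis add.commute diff_add_cancel)
  qed
  have d4: "g (Suc k,4) - g (k,4) = u" if "k < W" for k using L3(2)[rule_format, OF that] g14 by simp
  have r0: "g (Suc k,0) = g (k,0) + u" if "k < W" for k using d0[OF that] by (metis add.commute diff_add_cancel)
  have r4: "g (Suc k,4) = g (k,4) + u" if "k < W" for k using d4[OF that] by (metis add.commute diff_add_cancel)
  have t0: "g (k,0) = g (0,0) + smul k u" if "k \<le> W" for k
    by (rule telescope[where a = "\<lambda>k. g (k,0)" and M = W and u = u, OF d0 that])
  have t4: "g (k,4) = g (0,4) + smul k u" if "k \<le> W" for k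
    by (rule telescope[where a = "\<lambda>k. g (k,4)" and M = W and u = u, OF d4 that])
  have le45: "(4::nat) \<le> 5" by simp
  have tc: "g (0,4) = g (0,0) + smul 4 e"
    using telescope[where a = "\<lambda>k. g (0,k)" and M = 5 and u = e, OF d2 le45] by simp
  define c where "c = 2 * i + 1"
  have ci: "1 \<le> i" "i \<le> N" using i AB by auto
  have c3: "3 \<le> c" "Suc c \<le> W" using ci by (simp_all add: c_def W_def Wd_def)
  obtain c' where c': "c = Suc c'" using c_def by simp
  have c'3: "2 \<le> c'" "c' < W" using c3 c' by simp_all
  have vL: "(c,2) \<in> Lpts N A" using i(1) by (auto simp: Lpts_def c_def)
  have vR: "(c,2) \<notin> Rpts N B" by (auto simp: Rpts_def frame_def)
  have wR: "(c,3) \<in> Rpts N B" using i(2) by (auto simp: Rpts_def c_def)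
  have wL: "(c,3) \<notin> Lpts N A" using c3 by (auto simp: Lpts_def frame_def)
  have fr: "(k, y) \<in> frame N" if "k \<le> W" "y = 0 \<or> y = 1 \<or> y = 4 \<or> y = 5" for k y
    using that by (simp add: fm)
  have fL: "(k, y) \<in> Lpts N A" if "k \<le> W" "y = 0 \<or> y = 1" for k y
    using that by (auto simp: Lpts_def fm)
  have fR: "(k, y) \<in> Rpts N B" if "k \<le> W" "2 \<le> k" "y = 4 \<or> y = 5" for k y
    using that by (auto simp: Rpts_def fm)
  have gv: "g (c,2) = g (c,1) + e"
  proof -
    define d where "d = g (c,2) - g (c,1)"
    have "((c,1),(c,2)) \<in> EH N A B" using fL[of c 1] c3 vL by (simp add: EH_def padj_iff)
    then have ud: "unitv d" unfolding d_def using adjE[of "(c,1)" "(c,2)"] fL[of c 1] c3 vL by simp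
    have "g (Suc c,1) = g (c,1) + u" using r1[of "Suc c"] r1[of c] r0[of c] c3 by (simp add: algebra_simps)
    moreover have "g (Suc c,1) \<noteq> g (c,2)" using neq[of "(Suc c,1)" "(c,2)"] fL[of "Suc c" 1] c3 vL by simp
    ultimately have d1: "d \<noteq> u" by (auto simp: d_def algebra_simps)
    have "g (c,1) = g (c',1) + u" using r1[of c] r1[of c'] r0[of c'] c' c3 by (simp add: algebra_simps)
    moreover have "g (c',1) \<noteq> g (c,2)" using neq[of "(c',1)" "(c,2)"] fL[of c' 1] c'3 vL by simp
    ultimately have d2: "d \<noteq> -u" by (auto simp: d_def algebra_simps)
    have "g (c,1) = g (c,0) + e" using r1[of c] c3 by simp
    moreover have "g (c,0) \<noteq> g (c,2)" using neq[of "(c,0)" "(c,2)"] fL[of c 0] c3 vL by simp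
    ultimately have d3: "d \<noteq> -e" by (auto simp: d_def algebra_simps)
    have "d = e" using perp_third[OF uu ud ue pue d1 d2 d3] .
    then show ?thesis by (simp add: d_def algebra_simps)
  qed
  have gw: "g (c,3) = g (c,4) - e"
  proof -
    define d where "d = g (c,3) - g (c,4)"
    have "((c,4),(c,3)) \<in> EH N A B" using fR[of c 4] c3 wR by (simp add: EH_def padj_iff)
    then have ud: "unitv d" unfolding d_def using adjE[of "(c,4)" "(c,3)"] fR[of c 4] c3 wR by simp
    have "g (Suc c,4) = g (c,4) + u" using r4[of c] c3 by simp
    moreover have "g (Suc c,4) \<noteq> g (c,3)" using neq[of "(Suc c,4)" "(c,3)"] fR[of "Suc c" 4] c3 wR by simp
    ultimately have d1: "d \<noteq> u" by (auto simp: d_def algebra_simps)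
    have "g (c,4) = g (c',4) + u" using r4[of c'] c' c'3 by simp
    moreover have "g (c',4) \<noteq> g (c,3)" using neq[of "(c',4)" "(c,3)"] fR[of c' 4] c'3 wR by simp
    ultimately have d2: "d \<noteq> -u" by (auto simp: d_def algebra_simps)
    have "g (c,5) = g (c,4) + e" using r5[of c] c3 by simp
    moreover have "g (c,5) \<noteq> g (c,3)" using neq[of "(c,5)" "(c,3)"] fR[of c 5] c3 wR by simp
    ultimately have d3: "d \<noteq> - (- e)" by (auto simp: d_def algebra_simps)
    have pue': "perp u (- e)" using pue by (simp add: perp_def)
    have ue': "unitv (- e)" using ue by simp
    have "d = - e" using perp_third[OF uu ud ue' pue' d1 d2 d3] .
    then show ?thesis by (simp add: d_def algebra_simps)
  qed
  have "g (c,3) - g (c,2) = e"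
  proof -
    have "g (c,3) - g (c,2) = (g (0,0) + smul 4 e + smul c u - e) - (g (0,0) + smul c u + e + e)"
      using gw gv t4[of c] tc r1[of c] t0[of c] c3 by (simp add: algebra_simps)
    also have "\<dots> = e" by (cases e) (simp add: smul_def)
    finally show ?thesis .
  qed
  then have "grid_adj (g (c,2)) (g (c,3))" using ue grid_adj_unitv by simp
  then have "((c,2),(c,3)) \<in> EH N A B" using hg vL wR by blast
  then show False using vL vR wR wL by (auto simp: EH_def)
qed


lemma simple_ptgraph: "finite P \<Longrightarrow> simple_graph (ptgraph P)"
  unfolding simple_graph_def ptgraph_def verts_def edges_def sym_def irrefl_def
  by (auto simp: padj_def abs_minus_commute dest: injD[OF inj_prod_encode])

lemma mapg_cong: "(\<And>x. x \<in> verts G \<Longrightarrow> f x = h x) \<Longrightarrow> edges G \<subseteq> verts G \<times> verts G \<Longrightarrow> mapg f G = mapg h G"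
  unfolding mapg_def by (auto intro!: image_cong)

lemma KG_sub: "edges KG \<subseteq> verts KG \<times> verts KG"
  by (auto simp: KG_def verts_def edges_def)

lemma sig_Npts:
  assumes "N \<ge> 1" "p \<in> Npts"
  shows "sig N A p = (if fst p \<le> 2 then Inl (prod_encode p) else Inr (prod_encode p))"
proof -
  have "p \<in> Lpts N A \<longleftrightarrow> fst p \<le> 2"
    using assms unfolding Npts_def by (auto simp: L_mem frame_mem Wd_def)
  then show ?thesis by (simp add: sig_def)
qed

lemma glue_nbhd:
  assumes "A \<subseteq> {1..N}" "B \<subseteq> {1..N}" "N \<ge> 1"
  shows "closed_nbhd (glue SS (LG N A) (RG N B)) (Inl ` SS) = sig N A ` Npts"
    and "induced_sub (glue SS (LG N A) (RG N B)) (closed_nbhd (glue SS (LG N A) (RG N B)) (Inl ` SS))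
         = mapg (\<lambda>p. if fst p \<le> 2 then Inl (prod_encode p) else Inr (prod_encode p)) KG"
proof -
  have inj: "inj_on (sig N A) (verts (HG N A B))" by (rule sig_inj)
  have sub: "edges (HG N A B) \<subseteq> verts (HG N A B) \<times> verts (HG N A B)" using EH_sub by (simp add: HG_simps)
  have SL: "Spts \<subseteq> Lpts N A" using S_sub[OF assms(3)] by blast
  have IS: "Inl ` SS = sig N A ` Spts" unfolding SS_def image_image
    using SL by (auto simp: sig_L intro!: image_cong)
  have ST: "Spts \<subseteq> verts (HG N A B)" using SL by (auto simp: HG_simps)
  show C: "closed_nbhd (glue SS (LG N A) (RG N B)) (Inl ` SS) = sig N A ` Npts"
    unfolding glue_eq[OF assms(2)] IS mapg_nbhd[OF inj sub ST] nbhd_HG[OF assms] ..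
  have NT: "Npts \<subseteq> verts (HG N A B)"
    using nbhd_HG[OF assms] by (auto simp: closed_nbhd_def)
  have "induced_sub (glue SS (LG N A) (RG N B)) (sig N A ` Npts) = mapg (sig N A) KG"
    unfolding glue_eq[OF assms(2)] mapg_induced[OF inj sub NT] induced_HG[OF assms] ..
  also have "\<dots> = mapg (\<lambda>p. if fst p \<le> 2 then Inl (prod_encode p) else Inr (prod_encode p)) KG"
    by (rule mapg_cong[OF _ KG_sub]) (simp add: sig_Npts[OF assms(3)] KG_def verts_def)
  finally show "induced_sub (glue SS (LG N A) (RG N B)) (closed_nbhd (glue SS (LG N A) (RG N B)) (Inl ` SS))
         = mapg (\<lambda>p. if fst p \<le> 2 then Inl (prod_encode p) else Inr (prod_encode p)) KG"
    unfolding C .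
qed

lemma iso_refl: "iso_fixing S G G"
  unfolding iso_fixing_def by (intro exI[of _ id]) auto

lemma glue_grid:
  assumes "A \<subseteq> {1..N}" "B \<subseteq> {1..N}" "N \<ge> 1"
  shows "grid_induced (glue SS (LG N A) (RG N B)) \<longleftrightarrow> A \<inter> B = {}"
proof -
  have inj: "inj_on (sig N A) (verts (HG N A B))" by (rule sig_inj)
  have sub: "edges (HG N A B) \<subseteq> verts (HG N A B) \<times> verts (HG N A B)" using EH_sub by (simp add: HG_simps)
  have "grid_induced (glue SS (LG N A) (RG N B)) \<longleftrightarrow> grid_induced (HG N A B)"
    unfolding glue_eq[OF assms(2)] by (rule mapg_grid_induced[OF inj sub])
  also have "\<dots> \<longleftrightarrow> A \<inter> B = {}"
  proof
    assume "grid_induced (HG N A B)"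
    then obtain g where g: "inj_on g (Lpts N A \<union> Rpts N B)"
      "\<forall>p\<in>Lpts N A \<union> Rpts N B. \<forall>q\<in>Lpts N A \<union> Rpts N B. (p, q) \<in> EH N A B \<longleftrightarrow> grid_adj (g p) (g q)"
      unfolding grid_induced_def HG_simps by blast
    show "A \<inter> B = {}"
    proof (rule ccontr)
      assume "A \<inter> B \<noteq> {}"
      then obtain i where "i \<in> A" "i \<in> B" by blast
      then show False using rigid[OF assms _ _ g] by blast
    qed
  next
    assume "A \<inter> B = {}"
    then show "grid_induced (HG N A B)" using embed_disjoint[OF assms(1,2)] by blast
  qed
  finally show ?thesis .
qed

theorem corollary5p6:
  shows "disjointness_expressing grid_induced 6 1"
  unfolding disjointness_expressing_def
proof (intro exI[of _ "30::real"] conjI allI impI)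
  show "(0::real) < 30" by simp
  fix N :: nat assume N: "N \<ge> 1"
  show "\<exists>(L :: nat set \<Rightarrow> nat graph) (R :: nat set \<Rightarrow> nat graph) (S :: nat set). (\<forall>X. X \<subseteq> {1..N} \<longrightarrow> simple_graph (L X) \<and> simple_graph (R X) \<and> S \<subseteq> verts (L X) \<and> S \<subseteq> verts (R X)) \<and>
          (\<forall>A B. A \<subseteq> {1..N} \<longrightarrow> B \<subseteq> {1..N} \<longrightarrow>
             connected_graph (glue S (L A) (R B)) \<and>
             real (card (verts (glue S (L A) (R B)))) \<le> 30 * real N powr (1 / real 1) \<and>
             card (closed_nbhd (glue S (L A) (R B)) (Inl ` S)) \<le> 6 \<and>
             (grid_induced (glue S (L A) (R B)) \<longleftrightarrow> A \<inter> B = {})) \<and>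
          (\<forall>A B A' B'. A \<subseteq> {1..N} \<longrightarrow> B \<subseteq> {1..N} \<longrightarrow> A' \<subseteq> {1..N} \<longrightarrow> B' \<subseteq> {1..N} \<longrightarrow>
             iso_fixing (Inl ` S)
               (induced_sub (glue S (L A) (R B)) (closed_nbhd (glue S (L A) (R B)) (Inl ` S)))
               (induced_sub (glue S (L A') (R B')) (closed_nbhd (glue S (L A') (R B')) (Inl ` S))))"
  proof (rule exI[where x="LG N"], rule exI[where x="RG N"], rule exI[where x=SS], intro conjI allI impI)
    fix X assume X: "X \<subseteq> {1..N}"
    have fin: "finite (Lpts N X)" "finite (Rpts N X)" using P_fin[OF X X] by (auto intro: finite_subset)
    show "simple_graph (LG N X)" unfolding LG_def by (rule simple_ptgraph[OF fin(1)])
    show "simple_graph (RG N X)" unfolding RG_def by (rule simple_ptgraph[OF fin(2)])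
    show "SS \<subseteq> verts (LG N X)" "SS \<subseteq> verts (RG N X)"
      using S_sub[OF N, of X X] by (auto simp: SS_def LG_def RG_def ptgraph_def verts_def)
  next
    fix A B assume AB: "A \<subseteq> {1..N}" "B \<subseteq> {1..N}"
    have inj: "inj_on (sig N A) (verts (HG N A B))" by (rule sig_inj)
    show "connected_graph (glue SS (LG N A) (RG N B))"
      unfolding glue_eq[OF AB(2)] by (rule mapg_connected[OF HG_connected[OF AB N]])
    have "card (verts (glue SS (LG N A) (RG N B))) \<le> 30 * N"
      unfolding glue_eq[OF AB(2)] mapg_card[OF inj] HG_simps using P_card[OF AB N] .
    then show "real (card (verts (glue SS (LG N A) (RG N B)))) \<le> 30 * real N powr (1 / real (1::nat))"
      by simp
    have "card (sig N A ` Npts) \<le> card Npts" by (rule card_image_le) (simp add: Npts_def)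
    also have "card Npts = 6" by (simp add: Npts_def)
    finally show "card (closed_nbhd (glue SS (LG N A) (RG N B)) (Inl ` SS)) \<le> 6"
      unfolding glue_nbhd(1)[OF AB N] .
    show "grid_induced (glue SS (LG N A) (RG N B)) \<longleftrightarrow> A \<inter> B = {}" by (rule glue_grid[OF AB N])
  next
    fix A B A' B' assume AB: "A \<subseteq> {1..N}" "B \<subseteq> {1..N}" "A' \<subseteq> {1..N}" "B' \<subseteq> {1..N}"
    show "iso_fixing (Inl ` SS)
               (induced_sub (glue SS (LG N A) (RG N B)) (closed_nbhd (glue SS (LG N A) (RG N B)) (Inl ` SS)))
               (induced_sub (glue SS (LG N A') (RG N B')) (closed_nbhd (glue SS (LG N A') (RG N B')) (Inl ` SS)))"
      unfolding glue_nbhd(2)[OF AB(1,2) N] glue_nbhd(2)[OF AB(3,4) N] by (rule iso_refl)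
  qed
qed


end
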